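(* Let $\mathcal{A}$ be a finite alphabet, $N$ a finite set of integers and $f:\mathcal{A}^{|N|}\to\mathcal{A}$ an irreducible local rule. (i) If $N$ is reflection-symmetrical or $\widehat{r\nu}f=f$ for some $\nu\in S_{\mathcal{A}}$, then the $\mathcal{T}_{\mathcal{A}}$-equivalence class of $\Phi^N_f$ is \[[\Phi^N_f]=\{\Phi^M_g\mid M\cong N,\ g\in[f]\}.\] (ii) Otherwise $N$ and $[f]$ induce the following two (distinct) equivalence classes of $\mathcal{C}_{\mathcal{A}}/\mathcal{T}_{\mathcal{A}}$: \[[\Phi^N_f]=\{\Phi^{d+N}_{\hat\nu f},\ \Phi^{d-N}_{\widehat{r\nu}f}\mid d\in\mathbb{Z},\ \nu\in S_{\mathcal{A}}\},\qquad [\Phi^N_{\hat rf}]=\{\Phi^{d+N}_{\widehat{r\nu}f},\ \Phi^{d-N}_{\hat\nu f}\mid d\in\mathbb{Z},\ \nu\in S_{\mathcal{A}}\}.\]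
   Context: For finite $N=\{j_1<\dots<j_n\}\subset\mathbb{Z}$ and $f:\mathcal{A}^n\to\mathcal{A}$, $\Phi^N_f(x)_i=f(x_{i+j_1}\dots x_{i+j_n})$. A local rule is irreducible if it depends on every argument (for each index some change of only that input letter changes the output). $S_{\mathcal{A}}$ is the group of permutations of $\mathcal{A}$. Rule operators: $\hat\nu f(w)=\nu f(\nu^{-1}w)$ (letterwise), $\hat r f(w)=f(rw)$ where $r(a_1\dots a_n)=a_n\dots a_1$, and $\widehat{r\nu}=\hat r\hat\nu$; $[f]=\{\hat\alpha f\mid \alpha\in\{1,r\}\times S_{\mathcal{A}}\}$. $\mathcal{C}_{\mathcal{A}}$ is the set of all CA global maps on $\mathcal{A}^{\mathbb{Z}}$. Operators on global maps: $\sigma\Phi=\sigma\circ\Phi$ with $(\sigma x)_i=x_{i+1}$; $\hat\nu\Phi(x)=\nu\Phi(\nu^{-1}x)$ (cellwise); $\hat r\Phi(x)=r\Phi(rx)$ with $(rx)_i=x_{-i}$. $\mathcal{T}_{\mathcal{A}}=\{\sigma^i\hat r^j\hat\nu\mid i\in\mathbb{Z},j\in\{0,1\},\nu\in S_{\mathcal{A}}\}$ is the group they generate, acting on $\mathcal{C}_{\mathcal{A}}$; $[\Phi]$ denotes the orbit of $\Phi$. For sets of integers, $d+N=\{d+i\mid i\in N\}$, $d-N=\{d-i\mid i\in N\}$; $M\cong N$ iff $N=j+M$ or $N=j-M$ for some $j\in\mathbb{Z}$; $N$ is reflection-symmetrical if $N=j-N$ for some $j\in\mathbb{Z}$. *)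

theory Defs
  imports Main
begin

text \<open>Configurations over the alphabet 'a are maps int => 'a; a local rule is a
function on words (lists); only its values on words of length |N| matter.\<close>

type_synonym 'a config = "int \<Rightarrow> 'a"
type_synonym 'a gmap = "'a config \<Rightarrow> 'a config"
type_synonym 'a rule = "'a list \<Rightarrow> 'a"

definition CA :: "int set \<Rightarrow> 'a rule \<Rightarrow> 'a gmap" where
  "CA N f = (\<lambda>x i. f (map (\<lambda>j. x (i + j)) (sorted_list_of_set N)))"

definition irreducible :: "int set \<Rightarrow> 'a rule \<Rightarrow> bool" where
  "irreducible N f \<longleftrightarrow> (\<forall>k < card N. \<exists>w a. length w = card N \<and> f (w[k := a]) \<noteq> f w)"

definition perm_rule :: "('a \<Rightarrow> 'a) \<Rightarrow> 'a rule \<Rightarrow> 'a rule" where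
  "perm_rule \<nu> f = (\<lambda>w. \<nu> (f (map (inv \<nu>) w)))"

definition rev_rule :: "'a rule \<Rightarrow> 'a rule" where
  "rev_rule f = (\<lambda>w. f (rev w))"

definition rule_class :: "'a rule \<Rightarrow> 'a rule set" where
  "rule_class f = {perm_rule \<nu> f | \<nu>. bij \<nu>} \<union> {rev_rule (perm_rule \<nu> f) | \<nu>. bij \<nu>}"

definition shift_map :: "int \<Rightarrow> 'a gmap \<Rightarrow> 'a gmap" where
  "shift_map k \<Phi> = (\<lambda>x i. \<Phi> x (i + k))"

definition perm_map :: "('a \<Rightarrow> 'a) \<Rightarrow> 'a gmap \<Rightarrow> 'a gmap" where
  "perm_map \<nu> \<Phi> = (\<lambda>x. \<nu> \<circ> \<Phi> (inv \<nu> \<circ> x))"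

definition refl_config :: "'a config \<Rightarrow> 'a config" where
  "refl_config x = (\<lambda>i. x (- i))"

definition rev_map :: "'a gmap \<Rightarrow> 'a gmap" where
  "rev_map \<Phi> = (\<lambda>x. refl_config (\<Phi> (refl_config x)))"

text \<open>Orbit of a global map under T_A = { sigma^i r^j nu }.\<close>
definition orbit :: "'a gmap \<Rightarrow> 'a gmap set" where
  "orbit \<Phi> = {shift_map i ((if j then rev_map else id) (perm_map \<nu> \<Phi>)) | i j \<nu>. bij \<nu>}"

definition plus_set :: "int \<Rightarrow> int set \<Rightarrow> int set" where
  "plus_set d N = (\<lambda>i. d + i) ` N"

definition minus_set :: "int \<Rightarrow> int set \<Rightarrow> int set" where
  "minus_set d N = (\<lambda>i. d - i) ` N"

definition congr_nbhd :: "int set \<Rightarrow> int set \<Rightarrow> bool" where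
  "congr_nbhd M N \<longleftrightarrow> (\<exists>j. N = plus_set j M \<or> N = minus_set j M)"

definition refl_sym :: "int set \<Rightarrow> bool" where
  "refl_sym N \<longleftrightarrow> (\<exists>j. N = minus_set j N)"

definition rule_eq :: "nat \<Rightarrow> 'a rule \<Rightarrow> 'a rule \<Rightarrow> bool" where
  "rule_eq n f g \<longleftrightarrow> (\<forall>w. length w = n \<longrightarrow> f w = g w)"

end

theory Submission
  imports Defs
begin

lemma sl_props: "finite M \<Longrightarrow> set (sorted_list_of_set M) = M \<and> distinct (sorted_list_of_set M) \<and> length (sorted_list_of_set M) = card M"
  by simp

lemma sl_plus: assumes "finite N"
  shows "sorted_list_of_set (plus_set d N) = map (\<lambda>i. d + i) (sorted_list_of_set N)"
proof -
  have "sorted_wrt (<) (map (\<lambda>i. d + i) (sorted_list_of_set N))"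
    by (simp add: sorted_wrt_map)
  moreover have "length (map (\<lambda>i. d + i) (sorted_list_of_set N)) = card (plus_set d N)"
    using assms by (simp add: plus_set_def card_image)
  ultimately show ?thesis using assms
    by (subst sorted_list_of_set_unique[symmetric]) (auto simp: plus_set_def)
qed

lemma sl_minus: assumes "finite N"
  shows "sorted_list_of_set (minus_set d N) = rev (map (\<lambda>i. d - i) (sorted_list_of_set N))"
proof -
  have "sorted_wrt (<) (rev (map (\<lambda>i. d - i) (sorted_list_of_set N)))"
    by (simp add: sorted_wrt_map sorted_wrt_rev)
  moreover have "length (rev (map (\<lambda>i. d - i) (sorted_list_of_set N))) = card (minus_set d N)"
    using assms by (simp add: minus_set_def card_image inj_on_def)
  ultimately show ?thesis using assms
    by (subst sorted_list_of_set_unique[symmetric]) (auto simp: minus_set_def)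
qed

lemma shift_CA: "finite N \<Longrightarrow> shift_map k (CA N f) = CA (plus_set k N) f"
  by (auto simp: shift_map_def CA_def sl_plus o_def add.assoc intro!: ext)

lemma perm_CA: "perm_map \<nu> (CA N f) = CA N (perm_rule \<nu> f)"
  by (auto simp: perm_map_def CA_def perm_rule_def o_def intro!: ext)

lemma rev_CA: "finite N \<Longrightarrow> rev_map (CA N f) = CA (minus_set 0 N) (rev_rule f)"
  by (auto simp: rev_map_def refl_config_def CA_def sl_minus rev_rule_def rev_map o_def intro!: ext)

lemma plus_minus: "plus_set i (minus_set j N) = minus_set (i + j) N"
  by (auto simp: plus_set_def minus_set_def image_image add.assoc add_diff_eq)

lemma plus_plus: "plus_set i (plus_set j N) = plus_set (i + j) N"
  by (auto simp: plus_set_def image_image add.assoc)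

lemma minus_minus: "minus_set i (minus_set j N) = plus_set (i - j) N"
  by (auto simp: plus_set_def minus_set_def image_image)

lemma minus_plus: "minus_set i (plus_set j N) = minus_set (i - j) N"
  by (auto simp: plus_set_def minus_set_def image_image)

lemma orbit_char: assumes "finite N"
  shows "orbit (CA N f) = {CA (plus_set d N) (perm_rule \<nu> f) | d \<nu>. bij \<nu>}
             \<union> {CA (minus_set d N) (rev_rule (perm_rule \<nu> f)) | d \<nu>. bij \<nu>}"
proof -
  have fm: "finite (minus_set 0 N)" using assms by (simp add: minus_set_def)
  have a: "shift_map i ((if j then rev_map else id) (perm_map \<nu> (CA N f))) =
     (if j then CA (minus_set i N) (rev_rule (perm_rule \<nu> f)) else CA (plus_set i N) (perm_rule \<nu> f))" for i j \<nu>
    using assms fm by (auto simp: perm_CA rev_CA shift_CA plus_minus)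
  show ?thesis unfolding orbit_def a by fastforce
qed

definition dep :: "'a gmap \<Rightarrow> int set" where
  "dep \<Phi> = {i. \<exists>x a. \<Phi> (x(i:=a)) 0 \<noteq> \<Phi> x 0}"

lemma exists_cfg: "distinct L \<Longrightarrow> length w = length L \<Longrightarrow> \<exists>x::'a config. map x L = w"
proof (induction L arbitrary: w)
  case Nil then show ?case by simp
next
  case (Cons j L)
  then obtain a w' where w: "w = a # w'" by (cases w) auto
  with Cons obtain x where "map x L = w'" by auto
  moreover have "map (x(j:=a)) L = map x L" using Cons.prems by (simp add: map_fun_upd)
  ultimately have "map (x(j:=a)) L = w'" by metis
  then have "map (x(j:=a)) (j#L) = w" using w by (simp only: list.map fun_upd_same)
  then show ?case by blast
qed

lemma map_upd_nth: "distinct L \<Longrightarrow> k < length L \<Longrightarrow> map (x(L!k := a)) L = (map x L)[k := a]"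
  by (rule nth_equalityI) (auto simp: nth_eq_iff_index_eq)

lemma CA_cong: "finite M \<Longrightarrow> (\<forall>j\<in>M. x j = y j) \<Longrightarrow> CA M g x 0 = CA M g y 0"
proof -
  assume "finite M" "\<forall>j\<in>M. x j = y j"
  then have "map x (sorted_list_of_set M) = map y (sorted_list_of_set M)" by (intro map_cong) auto
  then show ?thesis unfolding CA_def by (simp only: add_0)
qed

lemma dep_CA: assumes "finite M" "irreducible M g" shows "dep (CA M g) = M"
proof
  show "dep (CA M g) \<subseteq> M"
  proof
    fix i assume "i \<in> dep (CA M g)"
    then obtain x a where ne: "CA M g (x(i:=a)) 0 \<noteq> CA M g x 0" by (auto simp: dep_def)
    show "i \<in> M"
    proof (rule ccontr)
      assume "i \<notin> M"
      then have "CA M g (x(i:=a)) 0 = CA M g x 0" using assms(1) by (intro CA_cong) auto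
      with ne show False by simp
    qed
  qed
next
  show "M \<subseteq> dep (CA M g)"
  proof
    fix i assume "i \<in> M"
    let ?L = "sorted_list_of_set M"
    have d: "distinct ?L" and len: "length ?L = card M" and s: "set ?L = M" using assms(1) by auto
    obtain k where k: "k < card M" "?L ! k = i" using \<open>i \<in> M\<close> s len by (metis in_set_conv_nth)
    obtain w a where w: "length w = card M" "g (w[k:=a]) \<noteq> g w" using assms(2) k(1) unfolding irreducible_def by blast
    obtain x :: "'a config" where x: "map x ?L = w" using exists_cfg[OF d] w(1) len by metis
    have "map (x(i:=a)) ?L = w[k:=a]" using map_upd_nth[OF d, of k x a] k len x by simp
    moreover have "CA M g (x(i:=a)) 0 = g (map (x(i:=a)) ?L)" unfolding CA_def by (simp del: fun_upd_apply)
    ultimately have "CA M g (x(i:=a)) 0 = g (w[k:=a])" by simp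
    moreover have "CA M g x 0 = g w" unfolding CA_def using x by simp
    ultimately show "i \<in> dep (CA M g)" using w(2) unfolding dep_def mem_Collect_eq by metis
  qed
qed

lemma CA_eq_rule: assumes "finite M" "CA M g = CA M g'" shows "rule_eq (card M) g g'"
  unfolding rule_eq_def
proof (intro allI impI)
  fix w :: "'a list" assume "length w = card M"
  then obtain x :: "'a config" where x: "map x (sorted_list_of_set M) = w"
    using exists_cfg[of "sorted_list_of_set M" w] assms(1) by auto
  have "CA M g x 0 = CA M g' x 0" using assms(2) by simp
  then show "g w = g' w" unfolding CA_def using x by simp
qed

lemma rule_eq_CA: "finite M \<Longrightarrow> rule_eq (card M) g g' \<Longrightarrow> CA M g = CA M g'"
  unfolding CA_def rule_eq_def by (auto intro!: ext)

lemma irr_perm: assumes "bij \<nu>" "irreducible N f" "card N' = card N"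
  shows "irreducible N' (perm_rule \<nu> f)"
  unfolding irreducible_def
proof (intro allI impI)
  fix k assume "k < card N'"
  then obtain w a where w: "length w = card N" "f (w[k:=a]) \<noteq> f w" using assms unfolding irreducible_def by auto
  have iv: "inv \<nu> \<circ> \<nu> = id" using assms(1) by (simp add: bij_is_inj)
  have "perm_rule \<nu> f ((map \<nu> w)[k := \<nu> a]) \<noteq> perm_rule \<nu> f (map \<nu> w)"
    unfolding perm_rule_def using w iv assms(1) bij_is_inj[OF assms(1)]
    by (simp add: map_update inj_eq)
  then show "\<exists>w a. length w = card N' \<and> perm_rule \<nu> f (w[k := a]) \<noteq> perm_rule \<nu> f w"
    using w(1) assms(3) by (intro exI[of _ "map \<nu> w"] exI[of _ "\<nu> a"]) simp
qed

lemma irr_rev: assumes "irreducible N f" "card N' = card N"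
  shows "irreducible N' (rev_rule f)"
  unfolding irreducible_def
proof (intro allI impI)
  fix k assume k: "k < card N'"
  have "card N - k - 1 < card N" using k assms(2) by simp
  then obtain w a where w: "length w = card N" "f (w[card N - k - 1:=a]) \<noteq> f w" using assms unfolding irreducible_def
    by blast
  have "rev ((rev w)[k := a]) = w[card N - k - 1 := a]" using w(1) k assms(2) by (simp add: rev_update)
  then have "rev_rule f ((rev w)[k := a]) \<noteq> rev_rule f (rev w)" unfolding rev_rule_def using w by simp
  then show "\<exists>w a. length w = card N' \<and> rev_rule f (w[k := a]) \<noteq> rev_rule f w"
    using w(1) assms(2) by (intro exI[of _ "rev w"] exI[of _ a]) simp
qed

lemma rev_perm: "rev_rule (perm_rule \<nu> g) = perm_rule \<nu> (rev_rule g)"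
  by (simp add: rev_rule_def perm_rule_def rev_map fun_eq_iff)

lemma rev_rev: "rev_rule (rev_rule g) = g"
  by (simp add: rev_rule_def fun_eq_iff)

lemma perm_id: "perm_rule id g = g"
  by (simp add: perm_rule_def fun_eq_iff)

lemma plus0: "plus_set 0 N = N" by (simp add: plus_set_def)

lemma card_plus: "card (plus_set d N) = card N"
  by (simp add: plus_set_def card_image)
lemma card_minus: "card (minus_set d N) = card N"
  by (simp add: minus_set_def card_image inj_on_def)
lemma fin_plus: "finite N \<Longrightarrow> finite (plus_set d N)" by (simp add: plus_set_def)
lemma fin_minus: "finite N \<Longrightarrow> finite (minus_set d N)" by (simp add: minus_set_def)

lemma sym_rules: assumes "bij \<nu>0" "rule_eq n (rev_rule (perm_rule \<nu>0 f)) f" "bij \<nu>"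
  shows "rule_eq n (rev_rule (perm_rule \<nu> f)) (perm_rule (\<nu> \<circ> \<nu>0) f)"
    and "rule_eq n (perm_rule \<nu> f) (rev_rule (perm_rule (\<nu> \<circ> \<nu>0) f))"
proof -
  have ii: "inv (\<nu> \<circ> \<nu>0) = inv \<nu>0 \<circ> inv \<nu>" using assms by (simp add: o_inv_distrib)
  have H: "f u = \<nu>0 (f (map (inv \<nu>0) (rev u)))" if "length u = n" for u
    using assms(2) that unfolding rule_eq_def rev_rule_def perm_rule_def by metis
  show "rule_eq n (rev_rule (perm_rule \<nu> f)) (perm_rule (\<nu> \<circ> \<nu>0) f)"
    unfolding rule_eq_def
  proof (intro allI impI)
    fix w :: "'a list" assume "length w = n"
    then have "f (map (inv \<nu>) (rev w)) = \<nu>0 (f (map (inv \<nu>0) (rev (map (inv \<nu>) (rev w)))))"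
      by (intro H) simp
    then show "rev_rule (perm_rule \<nu> f) w = perm_rule (\<nu> \<circ> \<nu>0) f w"
      unfolding rev_rule_def perm_rule_def ii by (simp add: rev_map)
  qed
  show "rule_eq n (perm_rule \<nu> f) (rev_rule (perm_rule (\<nu> \<circ> \<nu>0) f))"
    unfolding rule_eq_def
  proof (intro allI impI)
    fix w :: "'a list" assume "length w = n"
    then have "f (map (inv \<nu>) w) = \<nu>0 (f (map (inv \<nu>0) (rev (map (inv \<nu>) w))))"
      by (intro H) simp
    then show "perm_rule \<nu> f w = rev_rule (perm_rule (\<nu> \<circ> \<nu>0) f) w"
      unfolding rev_rule_def perm_rule_def ii by (simp add: rev_map)
  qed
qed

lemma extra_in_orbit:
  assumes fin: "finite N" and H: "refl_sym N \<or> (\<exists>\<nu>. bij \<nu> \<and> rule_eq (card N) (rev_rule (perm_rule \<nu> f)) f)"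
    and nu: "bij \<nu>"
  shows "CA (plus_set d N) (rev_rule (perm_rule \<nu> f)) \<in> orbit (CA N f)"
    and "CA (minus_set d N) (perm_rule \<nu> f) \<in> orbit (CA N f)"
proof -
  have "CA (plus_set d N) (rev_rule (perm_rule \<nu> f)) \<in> orbit (CA N f) \<and>
        CA (minus_set d N) (perm_rule \<nu> f) \<in> orbit (CA N f)"
  proof (cases "refl_sym N")
    case True
    then obtain j where j: "N = minus_set j N" by (auto simp: refl_sym_def)
    have "plus_set d N = minus_set (d + j) N" by (metis j plus_minus)
    moreover have "minus_set d N = plus_set (d - j) N" by (metis j minus_minus)
    ultimately show ?thesis using nu unfolding orbit_char[OF fin] by auto
  next
    case False
    with H obtain \<nu>0 where n0: "bij \<nu>0" "rule_eq (card N) (rev_rule (perm_rule \<nu>0 f)) f" by auto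
    have b: "bij (\<nu> \<circ> \<nu>0)" using n0 nu by (simp add: bij_comp)
    have "CA (plus_set d N) (rev_rule (perm_rule \<nu> f)) = CA (plus_set d N) (perm_rule (\<nu> \<circ> \<nu>0) f)"
      using sym_rules(1)[OF n0 nu] fin_plus[OF fin] card_plus by (metis rule_eq_CA)
    moreover have "CA (minus_set d N) (perm_rule \<nu> f) = CA (minus_set d N) (rev_rule (perm_rule (\<nu> \<circ> \<nu>0) f))"
      using sym_rules(2)[OF n0 nu] fin_minus[OF fin] card_minus by (metis rule_eq_CA)
    ultimately show ?thesis using b unfolding orbit_char[OF fin] by auto
  qed
  then show "CA (plus_set d N) (rev_rule (perm_rule \<nu> f)) \<in> orbit (CA N f)"
    and "CA (minus_set d N) (perm_rule \<nu> f) \<in> orbit (CA N f)" by auto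
qed

theorem proposition8:
  fixes N :: "int set" and f :: "'a::finite list \<Rightarrow> 'a"
  assumes "finite N" and "irreducible N f"
  shows "((refl_sym N \<or> (\<exists>\<nu>. bij \<nu> \<and> rule_eq (card N) (rev_rule (perm_rule \<nu> f)) f)) \<longrightarrow>
           orbit (CA N f) = {CA M g | M g. congr_nbhd M N \<and> g \<in> rule_class f}) \<and>
         (\<not> (refl_sym N \<or> (\<exists>\<nu>. bij \<nu> \<and> rule_eq (card N) (rev_rule (perm_rule \<nu> f)) f)) \<longrightarrow>
           orbit (CA N f) =
             {CA (plus_set d N) (perm_rule \<nu> f) | d \<nu>. bij \<nu>}
             \<union> {CA (minus_set d N) (rev_rule (perm_rule \<nu> f)) | d \<nu>. bij \<nu>}
         \<and> orbit (CA N (rev_rule f)) =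
             {CA (plus_set d N) (rev_rule (perm_rule \<nu> f)) | d \<nu>. bij \<nu>}
             \<union> {CA (minus_set d N) (perm_rule \<nu> f) | d \<nu>. bij \<nu>}
         \<and> orbit (CA N f) \<noteq> orbit (CA N (rev_rule f)))"
proof (intro conjI impI)
  note fin = assms(1)
  have orb2: "orbit (CA N (rev_rule f)) =
             {CA (plus_set d N) (rev_rule (perm_rule \<nu> f)) | d \<nu>. bij \<nu>}
             \<union> {CA (minus_set d N) (perm_rule \<nu> f) | d \<nu>. bij \<nu>}"
    unfolding orbit_char[OF fin] by (simp add: rev_perm[symmetric] rev_rev)
  assume H: "refl_sym N \<or> (\<exists>\<nu>. bij \<nu> \<and> rule_eq (card N) (rev_rule (perm_rule \<nu> f)) f)"
  show "orbit (CA N f) = {CA M g | M g. congr_nbhd M N \<and> g \<in> rule_class f}"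
  proof
    show "orbit (CA N f) \<subseteq> {CA M g | M g. congr_nbhd M N \<and> g \<in> rule_class f}"
    proof
      fix \<Phi> assume "\<Phi> \<in> orbit (CA N f)"
      then obtain d \<nu> where nu: "bij \<nu>" and
        "\<Phi> = CA (plus_set d N) (perm_rule \<nu> f) \<or> \<Phi> = CA (minus_set d N) (rev_rule (perm_rule \<nu> f))"
        unfolding orbit_char[OF fin] by blast
      moreover have "congr_nbhd (plus_set d N) N" unfolding congr_nbhd_def
        by (metis plus_plus plus0 add.left_inverse)
      moreover have "congr_nbhd (minus_set d N) N" unfolding congr_nbhd_def
        by (metis minus_minus plus0 diff_self)
      moreover have "perm_rule \<nu> f \<in> rule_class f" "rev_rule (perm_rule \<nu> f) \<in> rule_class f"
        using nu unfolding rule_class_def by auto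
      ultimately show "\<Phi> \<in> {CA M g | M g. congr_nbhd M N \<and> g \<in> rule_class f}" by blast
    qed
  next
    show "{CA M g | M g. congr_nbhd M N \<and> g \<in> rule_class f} \<subseteq> orbit (CA N f)"
    proof
      fix \<Phi> assume "\<Phi> \<in> {CA M g | M g. congr_nbhd M N \<and> g \<in> rule_class f}"
      then obtain M g where P: "\<Phi> = CA M g" and c: "congr_nbhd M N" and g: "g \<in> rule_class f" by blast
      obtain d where M: "M = plus_set d N \<or> M = minus_set d N"
      proof -
        obtain j where "N = plus_set j M \<or> N = minus_set j M" using c unfolding congr_nbhd_def by blast
        then show ?thesis
        proof
          assume "N = plus_set j M"
          then have "M = plus_set (- j) N" by (metis plus_plus plus0 add.left_inverse)
          then show ?thesis using that by blast
        next
          assume "N = minus_set j M"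
          then have "M = minus_set j N" by (metis minus_minus plus0 diff_self)
          then show ?thesis using that by blast
        qed
      qed
      obtain \<nu> where nu: "bij \<nu>" and "g = perm_rule \<nu> f \<or> g = rev_rule (perm_rule \<nu> f)"
        using g unfolding rule_class_def by blast
      then show "\<Phi> \<in> orbit (CA N f)" using M P extra_in_orbit[OF fin H nu]
        unfolding orbit_char[OF fin] by blast
    qed
  qed
next
  note fin = assms(1)
  assume H: "\<not> (refl_sym N \<or> (\<exists>\<nu>. bij \<nu> \<and> rule_eq (card N) (rev_rule (perm_rule \<nu> f)) f))"
  show "orbit (CA N f) =
             {CA (plus_set d N) (perm_rule \<nu> f) | d \<nu>. bij \<nu>}
             \<union> {CA (minus_set d N) (rev_rule (perm_rule \<nu> f)) | d \<nu>. bij \<nu>}"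
    by (rule orbit_char[OF fin])
  show orb2: "orbit (CA N (rev_rule f)) =
             {CA (plus_set d N) (rev_rule (perm_rule \<nu> f)) | d \<nu>. bij \<nu>}
             \<union> {CA (minus_set d N) (perm_rule \<nu> f) | d \<nu>. bij \<nu>}"
    unfolding orbit_char[OF fin] by (simp add: rev_perm[symmetric] rev_rev)
  show "orbit (CA N f) \<noteq> orbit (CA N (rev_rule f))"
  proof
    assume E: "orbit (CA N f) = orbit (CA N (rev_rule f))"
    have "CA N (rev_rule f) \<in> orbit (CA N (rev_rule f))"
      unfolding orb2 by (rule UnI1, rule CollectI, rule exI[of _ 0], rule exI[of _ id]) (simp add: plus0 perm_id)
    then have "CA N (rev_rule f) \<in> orbit (CA N f)" using E by simp
    then obtain d \<nu> where nu: "bij \<nu>" and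
      C: "CA N (rev_rule f) = CA (plus_set d N) (perm_rule \<nu> f) \<or> CA N (rev_rule f) = CA (minus_set d N) (rev_rule (perm_rule \<nu> f))"
      unfolding orbit_char[OF fin] by blast
    have irr_rf: "irreducible N (rev_rule f)" using irr_rev[OF assms(2)] by simp
    from C show False
    proof
      assume C1: "CA N (rev_rule f) = CA (plus_set d N) (perm_rule \<nu> f)"
      have "irreducible (plus_set d N) (perm_rule \<nu> f)" using irr_perm[OF nu assms(2)] card_plus by simp
      then have "plus_set d N = N" using dep_CA[OF fin irr_rf] dep_CA[OF fin_plus[OF fin]] C1 by metis
      then have "CA N (rev_rule f) = CA N (perm_rule \<nu> f)" using C1 by simp
      then have R: "rule_eq (card N) (rev_rule f) (perm_rule \<nu> f)" using CA_eq_rule[OF fin] by blast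
      have "rule_eq (card N) (rev_rule (perm_rule \<nu> f)) f" unfolding rule_eq_def
      proof (intro allI impI)
        fix w :: "'a list" assume "length w = card N"
        then have "rev_rule f (rev w) = perm_rule \<nu> f (rev w)" using R unfolding rule_eq_def by simp
        then show "rev_rule (perm_rule \<nu> f) w = f w" by (simp add: rev_rule_def)
      qed
      then show False using H nu by blast
    next
      assume C2: "CA N (rev_rule f) = CA (minus_set d N) (rev_rule (perm_rule \<nu> f))"
      have "irreducible (minus_set d N) (rev_rule (perm_rule \<nu> f))"
        using irr_rev[OF irr_perm[OF nu assms(2)]] card_minus by simp
      then have "minus_set d N = N" using dep_CA[OF fin irr_rf] dep_CA[OF fin_minus[OF fin]] C2 by metis
      then have "refl_sym N" unfolding refl_sym_def by metis
      then show False using H by blast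
    qed
  qed
qed

end
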